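(* Let $\varphi,\psi$ be metric-compatible functions and $T\in\mathrm{Aut}(X,\mu)$ aperiodic. Then $\varphi(t)=O(\psi(t))$ as $t\to+\infty$ if and only if $[T]_\psi\subseteq[T]_\varphi$. Consequently $[T]_\varphi=[T]_\psi$ if and only if $\varphi(t)=O(\psi(t))$ and $\psi(t)=O(\varphi(t))$ as $t\to+\infty$.
   Context: $(X,\mu)$ standard atomless probability space; $\mathrm{Aut}(X,\mu)$ measure-preserving transformations modulo null sets. For aperiodic $T$, $[T]$ is the set of $U\in\mathrm{Aut}(X,\mu)$ with $U(x)=T^{c_U(x)}(x)$ a.e. for a measurable $c_U:X\to\mathbb Z$. $\varphi:\mathbb R_+\to\mathbb R_+$ is metric-compatible if subadditive, non-decreasing, $\varphi(0)=0$, $\varphi(t)>0$ for $t>0$. $[T]_\varphi=\{U\in[T]:\int_X\varphi(|c_U|)d\mu<\infty\}$. *)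

theory Defs
  imports "HOL-Probability.Probability" "HOL-Library.Landau_Symbols"
begin

definition atomless :: "'a measure \<Rightarrow> bool" where
  "atomless M \<longleftrightarrow> (\<forall>A \<in> sets M. emeasure M A > 0 \<longrightarrow>
      (\<exists>B \<in> sets M. B \<subseteq> A \<and> 0 < emeasure M B \<and> emeasure M B < emeasure M A))"

definition standard_atomless_prob :: "'a::polish_space measure \<Rightarrow> bool" where
  "standard_atomless_prob M \<longleftrightarrow> prob_space M \<and> sets M = sets borel \<and> atomless M"

text \<open>Measure-preserving automorphisms (invertible modulo null sets). Elements of
  Aut(X,mu) are represented by their representatives; all notions below are invariant under
  a.e. equality.\<close>
definition measure_preserving_map :: "'a measure \<Rightarrow> ('a \<Rightarrow> 'a) \<Rightarrow> bool" where
  "measure_preserving_map M U \<longleftrightarrow> U \<in> measurable M M \<and> distr M M U = M"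

definition aut :: "'a measure \<Rightarrow> ('a \<Rightarrow> 'a) \<Rightarrow> bool" where
  "aut M U \<longleftrightarrow> measure_preserving_map M U \<and>
     (\<exists>V. measure_preserving_map M V \<and> (AE x in M. V (U x) = x) \<and> (AE x in M. U (V x) = x))"

definition aperiodic :: "'a measure \<Rightarrow> ('a \<Rightarrow> 'a) \<Rightarrow> bool" where
  "aperiodic M T \<longleftrightarrow> (\<forall>n::nat. n \<ge> 1 \<longrightarrow> (AE x in M. (T ^^ n) x \<noteq> x))"

definition int_iter :: "('a \<Rightarrow> 'a) \<Rightarrow> int \<Rightarrow> 'a \<Rightarrow> 'a \<Rightarrow> bool" where
  "int_iter T k x y \<longleftrightarrow> (if k \<ge> 0 then y = (T ^^ nat k) x else (T ^^ nat (- k)) y = x)"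

definition full_group_phi :: "'a measure \<Rightarrow> ('a \<Rightarrow> 'a) \<Rightarrow> (real \<Rightarrow> real) \<Rightarrow> ('a \<Rightarrow> 'a) set" where
  "full_group_phi M T \<phi> = {U. aut M U \<and>
     (\<exists>c :: 'a \<Rightarrow> int. c \<in> measurable M (count_space UNIV) \<and>
        (AE x in M. int_iter T (c x) x (U x)) \<and>
        (\<integral>\<^sup>+ x. ennreal (\<phi> (real_of_int \<bar>c x\<bar>)) \<partial>M) < \<infinity>)}"

definition metric_compatible :: "(real \<Rightarrow> real) \<Rightarrow> bool" where
  "metric_compatible \<phi> \<longleftrightarrow>
     (\<forall>s t. 0 \<le> s \<longrightarrow> 0 \<le> t \<longrightarrow> \<phi> (s + t) \<le> \<phi> s + \<phi> t) \<and>
     mono_on {0..} \<phi> \<and> \<phi> 0 = 0 \<and> (\<forall>t > 0. \<phi> t > 0)"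

end

theory Submission
  imports Defs
begin


locale setting = prob_space M for M :: "'a::polish_space measure" +
  fixes T V :: "'a \<Rightarrow> 'a"
  assumes sets_M: "sets M = sets borel"
    and atl: "atomless M"
    and T_meas: "T \<in> measurable M M" and T_distr: "distr M M T = M"
    and V_meas: "V \<in> measurable M M" and V_distr: "distr M M V = M"
    and VT: "AE x in M. V (T x) = x" and TV: "AE x in M. T (V x) = x"
    and aper: "aperiodic M T"
begin

lemma space_M: "space M = UNIV"
  using sets_eq_imp_space_eq[OF sets_M] by simp

lemma meas_borel: "f \<in> measurable M M \<Longrightarrow> f \<in> borel_measurable M"
  by (simp add: measurable_cong_sets[OF refl sets_M])

lemma funpow_meas: "f \<in> measurable M M \<Longrightarrow> (f ^^ n) \<in> measurable M M"
  by (induction n) (auto intro: measurable_comp)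

lemma funpow_distr: "f \<in> measurable M M \<Longrightarrow> distr M M f = M \<Longrightarrow> distr M M (f ^^ n) = M"
proof (induction n)
  case 0 then show ?case by (simp add: distr_id2 space_M)
next
  case (Suc n)
  have "distr M M (f ^^ Suc n) = distr M M ((f ^^ n) \<circ> f)" by (simp only: funpow_Suc_right)
  also have "\<dots> = distr (distr M M f) M (f ^^ n)"
    by (rule distr_distr[symmetric, OF funpow_meas[OF Suc.prems(1)] Suc.prems(1)])
  also have "\<dots> = M" using Suc by simp
  finally show ?case .
qed

lemma Tn_meas: "(T ^^ n) \<in> measurable M M" by (rule funpow_meas[OF T_meas])
lemma Vn_meas: "(V ^^ n) \<in> measurable M M" by (rule funpow_meas[OF V_meas])
lemma Tn_distr: "distr M M (T ^^ n) = M" by (rule funpow_distr[OF T_meas T_distr])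
lemma Vn_distr: "distr M M (V ^^ n) = M" by (rule funpow_distr[OF V_meas V_distr])

lemma pre_sets: "f \<in> measurable M M \<Longrightarrow> B \<in> sets M \<Longrightarrow> f -` B \<in> sets M"
  using measurable_sets[of f M M B] by (simp add: space_M)

lemma pre_measure:
  assumes "f \<in> measurable M M" "distr M M f = M" "B \<in> sets M"
  shows "measure M (f -` B) = measure M B"
proof -
  have "emeasure M (f -` B) = emeasure (distr M M f) B"
    using emeasure_distr[OF assms(1) assms(3)] by (simp add: space_M)
  then show ?thesis using assms(2) by (simp add: measure_def)
qed

lemma Tn_pre: "B \<in> sets M \<Longrightarrow> measure M ((T ^^ n) -` B) = measure M B"
  by (rule pre_measure[OF Tn_meas Tn_distr])
lemma Vn_pre: "B \<in> sets M \<Longrightarrow> measure M ((V ^^ n) -` B) = measure M B"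
  by (rule pre_measure[OF Vn_meas Vn_distr])

lemma AE_pull:
  assumes "f \<in> measurable M M" "distr M M f = M" "AE x in M. P x"
  shows "AE x in M. P (f x)"
proof -
  have "AE x in distr M M f. P x" unfolding assms(2) by (rule assms(3))
  then show ?thesis by (rule AE_distrD[OF assms(1)])
qed

definition G where "G = {x. V (T x) = x \<and> T (V x) = x \<and> (\<forall>n\<ge>1. (T ^^ n) x \<noteq> x)}"
definition Y where "Y = {x. \<forall>m. (T ^^ m) x \<in> G \<and> (V ^^ m) x \<in> G}"

lemma compl_sets: "A \<in> sets M \<Longrightarrow> -A \<in> sets M"
  using sets.compl_sets[of A M] by (simp add: space_M Compl_eq_Diff_UNIV)

lemma eqset: "f \<in> measurable M M \<Longrightarrow> g \<in> measurable M M \<Longrightarrow> {x. f x = g x} \<in> sets M"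
proof -
  assume a: "f \<in> measurable M M" "g \<in> measurable M M"
  have "{x\<in>space M. f x = g x} \<in> sets M"
    by (rule measurable_equality_set[OF meas_borel[OF a(1)] meas_borel[OF a(2)]])
  then show ?thesis unfolding space_M by (simp only: UNIV_I simp_thms)
qed

lemma G1_sets: "- {x. (T ^^ n) x = x} \<in> sets M"
proof -
  have "(\<lambda>x. x) \<in> measurable M M" by simp
  then show ?thesis using compl_sets eqset Tn_meas by blast
qed

lemma G2_sets: "{x. V (T x) = x} \<in> sets M"
proof -
  have "(\<lambda>x. V (T x)) \<in> measurable M M" using T_meas V_meas by measurable
  moreover have "(\<lambda>x. x) \<in> measurable M M" by simp
  ultimately show ?thesis using eqset by blast
qed

lemma G3_sets: "{x. T (V x) = x} \<in> sets M"
proof -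
  have "(\<lambda>x. T (V x)) \<in> measurable M M" using T_meas V_meas by measurable
  moreover have "(\<lambda>x. x) \<in> measurable M M" by simp
  ultimately show ?thesis using eqset by blast
qed

lemma G4_sets: "(\<Inter>n\<in>{n. n \<ge> 1}. - {x. (T ^^ n) x = x}) \<in> sets M"
proof (rule sets.countable_INT')
  show "(\<lambda>n. - {x. (T ^^ n) x = x}) ` {n. n \<ge> 1} \<subseteq> sets M" using G1_sets by blast
qed auto

lemma G_sets: "G \<in> sets M"
proof -
  have "G = {x. V (T x) = x} \<inter> {x. T (V x) = x} \<inter> (\<Inter>n\<in>{n. n \<ge> 1}. - {x. (T ^^ n) x = x})"
    unfolding G_def by blast
  then show ?thesis using G2_sets G3_sets G4_sets by simp
qed

lemma AE_G: "AE x in M. x \<in> G"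
proof -
  have "AE x in M. \<forall>n. n \<ge> 1 \<longrightarrow> (T ^^ n) x \<noteq> x"
    using aper unfolding aperiodic_def by (simp add: AE_all_countable)
  then show ?thesis using VT TV unfolding G_def by eventually_elim auto
qed

lemma Y_sets: "Y \<in> sets M"
proof -
  have "Y = (\<Inter>m. (T ^^ m) -` G \<inter> (V ^^ m) -` G)" unfolding Y_def by auto
  also have "\<dots> \<in> sets M"
    using pre_sets[OF Tn_meas G_sets] pre_sets[OF Vn_meas G_sets] by auto
  finally show ?thesis .
qed

lemma AE_Y: "AE x in M. x \<in> Y"
proof -
  have "\<forall>m. AE x in M. (T ^^ m) x \<in> G \<and> (V ^^ m) x \<in> G"
    using AE_pull[OF Tn_meas Tn_distr AE_G] AE_pull[OF Vn_meas Vn_distr AE_G]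
    by (auto intro: AE_conjI)
  then show ?thesis unfolding Y_def by (simp add: AE_all_countable)
qed

lemma Y_null: "-Y \<in> null_sets M"
  using AE_Y compl_sets[OF Y_sets] AE_iff_null_sets[of "-Y" M] by simp

lemma measure_Y: "X \<in> sets M \<Longrightarrow> measure M (X \<inter> Y) = measure M X"
  using AE_Y by (intro measure_eq_AE) (auto intro: Y_sets)

lemma measure_notY: "measure M (-Y) = 0"
  using Y_null by (rule measure_eq_0_null_sets)

lemma Y_G: "x \<in> Y \<Longrightarrow> x \<in> G"
proof -
  assume "x \<in> Y"
  then have "(T ^^ 0) x \<in> G" unfolding Y_def by blast
  then show ?thesis by simp
qed

lemma Y_VT: "x \<in> Y \<Longrightarrow> V (T x) = x" using Y_G G_def by auto
lemma Y_TV: "x \<in> Y \<Longrightarrow> T (V x) = x" using Y_G G_def by auto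
lemma Y_aper: "x \<in> Y \<Longrightarrow> n \<ge> 1 \<Longrightarrow> (T ^^ n) x \<noteq> x" using Y_G G_def by auto

lemma Y_T: assumes "x \<in> Y" shows "T x \<in> Y"
proof -
  have "(T ^^ m) (T x) \<in> G" for m
  proof -
    have "(T ^^ Suc m) x \<in> G" using assms unfolding Y_def by blast
    then show ?thesis by (simp add: funpow_swap1)
  qed
  moreover have "(V ^^ m) (T x) \<in> G" for m
  proof (cases m)
    case 0
    have "(T ^^ 1) x \<in> G" using assms unfolding Y_def by blast
    then show ?thesis using 0 by simp
  next
    case (Suc k)
    have "(V ^^ m) (T x) = (V ^^ k) x" using Suc Y_VT[OF assms] by (simp add: funpow_swap1)
    moreover have "(V ^^ k) x \<in> G" using assms unfolding Y_def by blast
    ultimately show ?thesis by simp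
  qed
  ultimately show ?thesis unfolding Y_def by blast
qed

lemma Y_V: assumes "x \<in> Y" shows "V x \<in> Y"
proof -
  have "(V ^^ m) (V x) \<in> G" for m
  proof -
    have "(V ^^ Suc m) x \<in> G" using assms unfolding Y_def by blast
    then show ?thesis by (simp add: funpow_swap1)
  qed
  moreover have "(T ^^ m) (V x) \<in> G" for m
  proof (cases m)
    case 0
    have "(V ^^ 1) x \<in> G" using assms unfolding Y_def by blast
    then show ?thesis using 0 by simp
  next
    case (Suc k)
    have "(T ^^ m) (V x) = (T ^^ k) x" using Suc Y_TV[OF assms] by (simp add: funpow_swap1)
    moreover have "(T ^^ k) x \<in> G" using assms unfolding Y_def by blast
    ultimately show ?thesis by simp
  qed
  ultimately show ?thesis unfolding Y_def by blast
qed

lemma Y_Tn: "x \<in> Y \<Longrightarrow> (T ^^ n) x \<in> Y"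
  by (induction n) (auto intro: Y_T)
lemma Y_Vn: "x \<in> Y \<Longrightarrow> (V ^^ n) x \<in> Y"
  by (induction n) (auto intro: Y_V)

lemma Y_VnTn: "x \<in> Y \<Longrightarrow> (V ^^ n) ((T ^^ n) x) = x"
proof (induction n)
  case (Suc n)
  have "(V ^^ Suc n) ((T ^^ Suc n) x) = (V ^^ n) (V (T ((T ^^ n) x)))"
    by (simp add: funpow_swap1)
  also have "\<dots> = (V ^^ n) ((T ^^ n) x)" using Y_VT[OF Y_Tn[OF Suc.prems]] by simp
  finally show ?case using Suc by simp
qed simp

lemma Y_TnVn: "x \<in> Y \<Longrightarrow> (T ^^ n) ((V ^^ n) x) = x"
proof (induction n)
  case (Suc n)
  have "(T ^^ Suc n) ((V ^^ Suc n) x) = (T ^^ n) (T (V ((V ^^ n) x)))"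
    by (simp add: funpow_swap1)
  also have "\<dots> = (T ^^ n) ((V ^^ n) x)" using Y_TV[OF Y_Vn[OF Suc.prems]] by simp
  finally show ?case using Suc by simp
qed simp

lemma Y_inj_pow: assumes "x \<in> Y" "(T ^^ i) x = (T ^^ j) x" shows "i = j"
proof -
  have H: False if "i' < j'" "(T ^^ i') x = (T ^^ j') x" for i' j'
  proof -
    have e1: "(T ^^ ((j' - i') + i')) x = (T ^^ (j' - i')) ((T ^^ i') x)"
      by (simp only: funpow_add comp_apply)
    have "(j' - i') + i' = j'" using that(1) by simp
    then have "(T ^^ (j' - i')) ((T ^^ i') x) = (T ^^ i') x" using e1 that(2) by simp
    moreover have "(T ^^ i') x \<in> Y" using Y_Tn assms(1) by blast
    moreover have "j' - i' \<ge> 1" using that(1) by simp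
    ultimately show False using Y_aper by blast
  qed
  show ?thesis
  proof (rule ccontr)
    assume "i \<noteq> j"
    then have "i < j \<or> j < i" by arith
    then show False using H[of i j] H[of j i] assms(2) by auto
  qed
qed

lemma int_iter_unique:
  assumes "x \<in> Y" "y \<in> Y" "int_iter T k x y" "int_iter T k' x y"
  shows "k = k'"
proof -
  { fix k k' :: int assume "k \<ge> 0" "k' < 0" "int_iter T k x y" "int_iter T k' x y"
    then have "y = (T ^^ nat k) x" "(T ^^ nat (-k')) y = x" by (auto simp: int_iter_def)
    then have "(T ^^ (nat (-k') + nat k)) x = x" by (simp add: funpow_add)
    then have False using Y_aper[OF assms(1), of "nat (-k') + nat k"] \<open>k' < 0\<close> by simp }
  note mixed = this
  show ?thesis
  proof (cases "k \<ge> 0"; cases "k' \<ge> 0")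
    assume "k \<ge> 0" "k' \<ge> 0"
    then have "(T ^^ nat k) x = (T ^^ nat k') x" using assms(3,4) by (auto simp: int_iter_def)
    then show ?thesis using Y_inj_pow[OF assms(1)] \<open>k \<ge> 0\<close> \<open>k' \<ge> 0\<close> by fastforce
  next
    assume "k \<ge> 0" "\<not> k' \<ge> 0"
    then show ?thesis using mixed[of k k'] assms(3,4) by simp
  next
    assume "\<not> k \<ge> 0" "k' \<ge> 0"
    then show ?thesis using mixed[of k' k] assms(3,4) by simp
  next
    assume "\<not> k \<ge> 0" "\<not> k' \<ge> 0"
    then have "(T ^^ nat (-k)) y = (T ^^ nat (-k')) y" using assms(3,4) by (auto simp: int_iter_def)
    then show ?thesis using Y_inj_pow[OF assms(2)] \<open>\<not> k \<ge> 0\<close> \<open>\<not> k' \<ge> 0\<close> by fastforce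
  qed
qed

end



context setting
begin

lemma atl_measure:
  assumes "A \<in> sets M" "measure M A > 0"
  shows "\<exists>B\<in>sets M. B \<subseteq> A \<and> 0 < measure M B \<and> measure M B < measure M A"
proof -
  have "emeasure M A > 0" using assms(2) by (simp add: emeasure_eq_measure)
  then obtain B where B: "B \<in> sets M" "B \<subseteq> A" "0 < emeasure M B" "emeasure M B < emeasure M A"
    using atl assms(1) unfolding atomless_def by blast
  have "0 < measure M B" using B(3) unfolding emeasure_eq_measure by simp
  moreover have "measure M B < measure M A"
    using B(4) unfolding emeasure_eq_measure by (simp add: ennreal_less_iff)
  ultimately show ?thesis using B(1,2) by blast
qed

lemma small_subset:
  assumes "A \<in> sets M" "measure M A > 0" "e > 0"
  shows "\<exists>B\<in>sets M. B \<subseteq> A \<and> 0 < measure M B \<and> measure M B \<le> e"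
proof -
  have "\<exists>B\<in>sets M. B \<subseteq> A \<and> 0 < measure M B \<and> measure M B \<le> measure M A / 2^k" for k
  proof (induction k)
    case 0 then show ?case using assms by auto
  next
    case (Suc k)
    then obtain B where B: "B \<in> sets M" "B \<subseteq> A" "0 < measure M B" "measure M B \<le> measure M A / 2^k"
      by blast
    obtain C where C: "C \<in> sets M" "C \<subseteq> B" "0 < measure M C" "measure M C < measure M B"
      using atl_measure[OF B(1) B(3)] by blast
    have mBC: "measure M (B - C) = measure M B - measure M C"
      using finite_measure_Diff C B by simp
    have h: "measure M A / 2^Suc k = (measure M A / 2^k) / 2" by simp
    show ?case
    proof (cases "measure M C \<le> measure M B / 2")
      case True
      then show ?thesis using C B h by (intro bexI[of _ C]) auto
    next
      case False
      then show ?thesis using C B h mBC by (intro bexI[of _ "B - C"]) auto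
    qed
  qed
  moreover obtain k :: nat where k: "measure M A / e < 2^k"
    using real_arch_pow[of 2 "measure M A / e"] by auto
  then have "measure M A / 2^k < e" using assms(3) by (simp add: field_simps)
  ultimately show ?thesis by (meson less_imp_le order_trans)
qed

lemma exhaust:
  fixes F :: "'a set \<Rightarrow> bool"
  assumes F_sets: "\<And>A. F A \<Longrightarrow> A \<in> sets M" and F_empty: "F {}"
    and F_down: "\<And>A B. F A \<Longrightarrow> B \<in> sets M \<Longrightarrow> B \<subseteq> A \<Longrightarrow> F B"
    and F_inc: "\<And>f. incseq f \<Longrightarrow> (\<And>i. F (f i)) \<Longrightarrow> F (\<Union>i. f i)"
  shows "\<exists>A. F A \<and> (\<forall>D\<in>sets M. D \<inter> A = {} \<longrightarrow> F (A \<union> D) \<longrightarrow> measure M D = 0)"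
proof -
  define adm where "adm B D \<longleftrightarrow> D \<in> sets M \<and> D \<inter> B = {} \<and> F (B \<union> D)" for B D
  define s where "s B = Sup (measure M ` {D. adm B D})" for B
  have bdd: "bdd_above (measure M ` {D. adm B D})" for B
    by (rule bdd_aboveI[of _ 1]) auto
  have adm_empty: "F B \<Longrightarrow> adm B {}" for B by (auto simp: adm_def)
  have ex: "\<exists>D. adm B D \<and> s B / 2 \<le> measure M D" if FB: "F B" for B
  proof -
    have m0: "measure M {} \<in> measure M ` {D. adm B D}" using adm_empty[OF FB] by blast
    have s0: "0 \<le> s B" unfolding s_def
      by (rule cSup_upper2[OF m0]) (use bdd in auto)
    show ?thesis
    proof (cases "s B = 0")
      case True then show ?thesis using adm_empty[OF FB] by auto
    next
      case False
      then have "s B / 2 < Sup (measure M ` {D. adm B D})" using s0 unfolding s_def by simp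
      then obtain m where "m \<in> measure M ` {D. adm B D}" "s B / 2 < m"
        by (rule less_cSupE) (use adm_empty[OF FB] in auto)
      then show ?thesis by auto
    qed
  qed
  define pick where "pick B = (SOME D. adm B D \<and> s B / 2 \<le> measure M D)" for B
  define A where "A i = ((\<lambda>B. B \<union> pick B) ^^ i) {}" for i
  have A_Suc: "A (Suc i) = A i \<union> pick (A i)" for i by (simp add: A_def)
  have A_0: "A 0 = {}" by (simp add: A_def)
  have pick_ok: "F B \<Longrightarrow> adm B (pick B) \<and> s B / 2 \<le> measure M (pick B)" for B
    unfolding pick_def using ex by (rule someI_ex) 
  have FA: "F (A i)" for i
  proof (induction i)
    case 0 then show ?case using A_0 F_empty by simp
  next
    case (Suc i) then show ?case using pick_ok[OF Suc] by (simp add: A_Suc adm_def)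
  qed
  have inc: "incseq A" by (rule incseq_SucI) (simp add: A_Suc)
  define Ainf where "Ainf = (\<Union>i. A i)"
  have FAinf: "F Ainf" unfolding Ainf_def by (rule F_inc[OF inc FA])
  have mA: "measure M (A (Suc i)) = measure M (A i) + measure M (pick (A i))" for i
  proof -
    have "adm (A i) (pick (A i))" using pick_ok[OF FA] by blast
    then show ?thesis unfolding A_Suc adm_def
      by (intro finite_measure_Union F_sets[OF FA]) auto
  qed
  show ?thesis
  proof (intro exI conjI ballI impI)
    show "F Ainf" by (rule FAinf)
    fix D assume D: "D \<in> sets M" "D \<inter> Ainf = {}" "F (Ainf \<union> D)"
    have admD: "adm (A i) D" for i
    proof -
      have "A i \<subseteq> Ainf" unfolding Ainf_def by blast
      then have "A i \<union> D \<subseteq> Ainf \<union> D" by blast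
      moreover have "A i \<union> D \<in> sets M" using F_sets[OF FA] D(1) by blast
      ultimately have "F (A i \<union> D)" using F_down[OF D(3)] by blast
      then show ?thesis using D \<open>A i \<subseteq> Ainf\<close> unfolding adm_def by blast
    qed
    have le: "measure M D \<le> s (A i)" for i
      unfolding s_def by (rule cSup_upper[OF _ bdd]) (use admD in auto)
    have grow: "real i * measure M D / 2 \<le> measure M (A i)" for i
    proof (induction i)
      case 0 then show ?case by (simp add: A_0)
    next
      case (Suc i)
      have "s (A i) / 2 \<le> measure M (pick (A i))" using pick_ok[OF FA] by blast
      then show ?case using Suc le[of i] mA[of i] by (simp add: field_simps)
    qed
    show "measure M D = 0"
    proof (rule ccontr)
      assume "measure M D \<noteq> 0"
      then have d: "measure M D > 0" using measure_nonneg[of M D] by linarith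
      obtain N :: nat where N: "2 / measure M D < real N" using reals_Archimedean2 by blast
      then have "2 < real N * measure M D" using d by (simp add: field_simps)
      moreover have "real N * measure M D / 2 \<le> 1" using grow[of N] prob_le_1[of "A N"] by linarith
      ultimately show False by simp
    qed
  qed
qed

lemma exact_subset:
  assumes E: "E \<in> sets M" and a: "0 \<le> a" "a \<le> measure M E"
  shows "\<exists>A\<in>sets M. A \<subseteq> E \<and> measure M A = a"
proof -
  define F where "F A \<longleftrightarrow> A \<in> sets M \<and> A \<subseteq> E \<and> measure M A \<le> a" for A
  have "\<exists>A. F A \<and> (\<forall>D\<in>sets M. D \<inter> A = {} \<longrightarrow> F (A \<union> D) \<longrightarrow> measure M D = 0)"
  proof (rule exhaust)
    show "\<And>A. F A \<Longrightarrow> A \<in> sets M" unfolding F_def by blast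
    show "F {}" using a E unfolding F_def by simp
    show "F B" if "F A" "B \<in> sets M" "B \<subseteq> A" for A B
    proof -
      have "measure M B \<le> measure M A" using that unfolding F_def by (intro finite_measure_mono) auto
      then show ?thesis using that unfolding F_def by (meson order_trans subset_trans)
    qed
    show "F (\<Union>i. f i)" if inc: "incseq f" and Ff: "\<And>i. F (f i)" for f
    proof -
      have rs: "range f \<subseteq> sets M" using Ff unfolding F_def by blast
      have lim: "(\<lambda>i. measure M (f i)) \<longlonglongrightarrow> measure M (\<Union>i. f i)"
        by (rule finite_Lim_measure_incseq[OF rs inc])
      have le: "\<forall>i\<ge>0. measure M (f i) \<le> a" using Ff unfolding F_def by blast
      have "measure M (\<Union>i. f i) \<le> a"
        by (rule LIMSEQ_le_const2[OF lim]) (use le in blast)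
      moreover have "(\<Union>i. f i) \<in> sets M" using rs by blast
      moreover have "(\<Union>i. f i) \<subseteq> E" using Ff unfolding F_def by blast
      ultimately show ?thesis unfolding F_def by blast
    qed
  qed
  then obtain A where FA: "F A" and mx: "\<forall>D\<in>sets M. D \<inter> A = {} \<longrightarrow> F (A \<union> D) \<longrightarrow> measure M D = 0"
    by blast
  have As: "A \<in> sets M" "A \<subseteq> E" "measure M A \<le> a" using FA unfolding F_def by auto
  have "measure M A = a"
  proof (rule ccontr)
    assume "measure M A \<noteq> a"
    then have lt: "measure M A < a" using As by simp
    have "measure M (E - A) = measure M E - measure M A"
      using finite_measure_Diff[OF E As(1) As(2)] .
    then have pos: "measure M (E - A) > 0" using lt a by simp
    have EAs: "E - A \<in> sets M" using E As(1) by blast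
    have pos2: "a - measure M A > 0" using lt by simp
    obtain D where D: "D \<in> sets M" "D \<subseteq> E - A" "0 < measure M D" "measure M D \<le> a - measure M A"
      using small_subset[OF EAs pos pos2] by blast
    have DA: "D \<inter> A = {}" using D(2) by blast
    have "measure M (A \<union> D) = measure M A + measure M D"
      using D(1) As(1) DA by (intro finite_measure_Union) auto
    then have "measure M (A \<union> D) \<le> a" using D(4) by simp
    moreover have "A \<union> D \<in> sets M" using D(1) As(1) by blast
    moreover have "A \<union> D \<subseteq> E" using D(2) As(2) by blast
    ultimately have "F (A \<union> D)" unfolding F_def by blast
    then have "measure M D = 0" using mx D(1) DA by blast
    then show False using D(3) by simp
  qed
  then show ?thesis using As by blast
qed

lemma sep_piece:
  assumes n: "n \<ge> 1" and L: "L \<in> sets M" "L \<subseteq> Y" "measure M L > 0"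
  shows "\<exists>D\<in>sets M. D \<subseteq> L \<and> measure M D > 0 \<and> (\<forall>x\<in>D. (T ^^ n) x \<notin> D)"
proof (rule ccontr)
  assume neg: "\<not> ?thesis"
  obtain B :: "'a set set" where B: "countable B" "topological_basis B"
    using ex_countable_basis by blast
  define P where "P b = L \<inter> b \<inter> (T ^^ n) -` (- b)" for b
  have Psets: "P b \<in> sets M" if "b \<in> B" for b
  proof -
    have "b \<in> sets M" using topological_basis_open[OF B(2) that] borel_open sets_M by auto
    then show ?thesis unfolding P_def using L(1) pre_sets[OF Tn_meas compl_sets] by blast
  qed
  have Pnull: "P b \<in> null_sets M" if "b \<in> B" for b
  proof -
    have "\<forall>x\<in>P b. (T ^^ n) x \<notin> P b" unfolding P_def by blast
    moreover have "P b \<subseteq> L" unfolding P_def by blast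
    ultimately have "\<not> measure M (P b) > 0" using neg Psets[OF that] by blast
    then have "measure M (P b) = 0" using measure_nonneg[of M "P b"] by linarith
    then show ?thesis using Psets[OF that] by (simp add: null_sets_def emeasure_eq_measure)
  qed
  have "L \<subseteq> (\<Union>b\<in>B. P b)"
  proof
    fix x assume x: "x \<in> L"
    then have "(T ^^ n) x \<noteq> x" using Y_aper L(2) n by blast
    then obtain U where U: "open U" "x \<in> U" "(T ^^ n) x \<notin> U"
      using separation_t1[of x "(T ^^ n) x"] by metis
    obtain b where "b \<in> B" "x \<in> b" "b \<subseteq> U" using topological_basisE[OF B(2) U(1) U(2)] by blast
    then show "x \<in> (\<Union>b\<in>B. P b)" using x U(3) unfolding P_def by blast
  qed
  moreover have "(\<Union>b\<in>B. P b) \<in> null_sets M" using null_sets_UN'[OF B(1)] Pnull by blast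
  ultimately have "L \<in> null_sets M" using null_sets_subset L(1) by blast
  then show False using L(3) measure_eq_0_null_sets by fastforce
qed

lemma big_disj:
  assumes n: "n \<ge> 1" and C: "C \<in> sets M" "C \<subseteq> Y"
  shows "\<exists>A\<in>sets M. A \<subseteq> C \<and> (\<forall>x\<in>A. (T ^^ n) x \<notin> A) \<and> measure M C \<le> 3 * measure M A"
proof -
  define F where "F A \<longleftrightarrow> A \<in> sets M \<and> A \<subseteq> C \<and> (\<forall>x\<in>A. (T ^^ n) x \<notin> A)" for A
  have "\<exists>A. F A \<and> (\<forall>D\<in>sets M. D \<inter> A = {} \<longrightarrow> F (A \<union> D) \<longrightarrow> measure M D = 0)"
  proof (rule exhaust)
    show "F {}" by (simp add: F_def)
    show "F B" if "F A" "B \<in> sets M" "B \<subseteq> A" for A B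
      using that unfolding F_def by blast
    show "F (\<Union>i. f i)" if inc: "incseq f" and Ff: "\<And>i. F (f i)" for f
    proof -
      have rs: "range f \<subseteq> sets M" using Ff unfolding F_def by blast
      have "(T ^^ n) x \<notin> (\<Union>i. f i)" if xU: "x \<in> (\<Union>i. f i)" for x
      proof
        assume "(T ^^ n) x \<in> (\<Union>i. f i)"
        then obtain j where j: "(T ^^ n) x \<in> f j" by blast
        obtain i where i: "x \<in> f i" using xU by blast
        have "f i \<subseteq> f (max i j)" "f j \<subseteq> f (max i j)" using inc by (auto simp: incseq_def)
        then show False using Ff[of "max i j"] i j unfolding F_def by blast
      qed
      then show ?thesis using rs Ff unfolding F_def by blast
    qed
  qed (simp add: F_def)
  then obtain A where FA: "F A" and mx: "\<forall>D\<in>sets M. D \<inter> A = {} \<longrightarrow> F (A \<union> D) \<longrightarrow> measure M D = 0"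
    by blast
  have As: "A \<in> sets M" "A \<subseteq> C" "\<forall>x\<in>A. (T ^^ n) x \<notin> A" using FA F_def by auto
  define L where "L = C - A - (T ^^ n) -` A - (V ^^ n) -` A"
  have Lsets: "L \<in> sets M" unfolding L_def
    using C(1) As(1) pre_sets[OF Tn_meas As(1)] pre_sets[OF Vn_meas As(1)] by blast
  have "measure M L = 0"
  proof (rule ccontr)
    assume "measure M L \<noteq> 0"
    then have pos: "measure M L > 0" using measure_nonneg[of M L] by linarith
    have LY: "L \<subseteq> Y" using C(2) unfolding L_def by blast
    obtain D where D: "D \<in> sets M" "D \<subseteq> L" "measure M D > 0" "\<forall>x\<in>D. (T ^^ n) x \<notin> D"
      using sep_piece[OF n Lsets LY pos] by blast
    have DA: "D \<inter> A = {}" using D(2) unfolding L_def by blast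
    have "F (A \<union> D)"
      unfolding F_def
    proof (intro conjI ballI)
      show "A \<union> D \<in> sets M" using As D by blast
      show "A \<union> D \<subseteq> C" using As D(2) unfolding L_def by blast
      fix x assume x: "x \<in> A \<union> D"
      show "(T ^^ n) x \<notin> A \<union> D"
      proof
        assume Tx: "(T ^^ n) x \<in> A \<union> D"
        show False
        proof (cases "x \<in> A")
          case True
          then have "x \<in> Y" using As(2) C(2) by blast
          then have "(V ^^ n) ((T ^^ n) x) \<in> A" using True Y_VnTn by simp
          then have "(T ^^ n) x \<notin> D" using D(2) unfolding L_def by blast
          then show False using Tx True As(3) by blast
        next
          case False
          then have "x \<in> D" using x by blast
          then have "(T ^^ n) x \<notin> A" using D(2) unfolding L_def by blast
          then show False using Tx D(4) \<open>x \<in> D\<close> by blast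
        qed
      qed
    qed
    then have "measure M D = 0" using mx D(1) DA by blast
    then show False using D(3) by simp
  qed
  have sub: "C \<subseteq> ((L \<union> A) \<union> (T ^^ n) -` A) \<union> (V ^^ n) -` A" unfolding L_def by blast
  have s1: "(T ^^ n) -` A \<in> sets M" "(V ^^ n) -` A \<in> sets M"
    using pre_sets[OF Tn_meas As(1)] pre_sets[OF Vn_meas As(1)] by auto
  have "measure M C \<le> measure M (((L \<union> A) \<union> (T ^^ n) -` A) \<union> (V ^^ n) -` A)"
    using sub s1 Lsets As(1) by (intro finite_measure_mono) auto
  also have "\<dots> \<le> measure M ((L \<union> A) \<union> (T ^^ n) -` A) + measure M ((V ^^ n) -` A)"
    using s1 Lsets As(1) by (intro measure_Un_le) auto
  also have "\<dots> \<le> measure M (L \<union> A) + measure M ((T ^^ n) -` A) + measure M ((V ^^ n) -` A)"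
    using s1 Lsets As(1) measure_Un_le[of "L \<union> A" M "(T ^^ n) -` A"] by auto
  also have "\<dots> \<le> measure M L + measure M A + measure M ((T ^^ n) -` A) + measure M ((V ^^ n) -` A)"
    using Lsets As(1) measure_Un_le[of L M A] by auto
  also have "\<dots> = 3 * measure M A"
    using \<open>measure M L = 0\<close> Tn_pre[OF As(1)] Vn_pre[OF As(1)] by simp
  finally show ?thesis using As by blast
qed

definition Q where "Q n A = {x \<in> Y. (V ^^ n) x \<in> A}"
definition good where
  "good n a S A \<longleftrightarrow> A \<in> sets M \<and> A \<subseteq> Y \<and> A \<inter> S = {} \<and> Q n A \<inter> S = {} \<and>
     A \<inter> Q n A = {} \<and> measure M A = a"

lemma Q_eq: "Q n A = (V ^^ n) -` A \<inter> Y" unfolding Q_def by blast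

lemma Q_sets: "A \<in> sets M \<Longrightarrow> Q n A \<in> sets M"
  unfolding Q_eq using pre_sets[OF Vn_meas] Y_sets by blast

lemma Q_measure: "A \<in> sets M \<Longrightarrow> measure M (Q n A) = measure M A"
  unfolding Q_eq using measure_Y[OF pre_sets[OF Vn_meas]] Vn_pre by simp

lemma step:
  assumes n: "n \<ge> 1" and S: "S \<in> sets M" "measure M S \<le> 1/4" and a: "0 \<le> a" "a \<le> 1/16"
  shows "\<exists>A. good n a S A"
proof -
  define R where "R = Y - S"
  define C where "C = R \<inter> (T ^^ n) -` R"
  have Rs: "R \<in> sets M" unfolding R_def using Y_sets S(1) by blast
  have Cs: "C \<in> sets M" unfolding C_def using Rs pre_sets[OF Tn_meas Rs] by blast
  have CY: "C \<subseteq> Y" unfolding C_def R_def by blast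
  have sub: "-C \<subseteq> ((-Y \<union> S) \<union> (T ^^ n) -` (-Y)) \<union> (T ^^ n) -` S" unfolding C_def R_def by blast
  have nY: "-Y \<in> sets M" using compl_sets[OF Y_sets] .
  have p1: "(T ^^ n) -` (-Y) \<in> sets M" "(T ^^ n) -` S \<in> sets M"
    using pre_sets[OF Tn_meas nY] pre_sets[OF Tn_meas S(1)] by auto
  have "measure M (-C) \<le> measure M (((-Y \<union> S) \<union> (T ^^ n) -` (-Y)) \<union> (T ^^ n) -` S)"
    using sub p1 nY S(1) by (intro finite_measure_mono) auto
  also have "\<dots> \<le> measure M ((-Y \<union> S) \<union> (T ^^ n) -` (-Y)) + measure M ((T ^^ n) -` S)"
    using p1 nY S(1) by (intro measure_Un_le) auto
  also have "\<dots> \<le> measure M (-Y \<union> S) + measure M ((T ^^ n) -` (-Y)) + measure M ((T ^^ n) -` S)"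
    using p1 nY S(1) measure_Un_le[of "-Y \<union> S" M "(T ^^ n) -` (-Y)"] by auto
  also have "\<dots> \<le> measure M (-Y) + measure M S + measure M ((T ^^ n) -` (-Y)) + measure M ((T ^^ n) -` S)"
    using nY S(1) measure_Un_le[of "-Y" M S] by auto
  also have "\<dots> = 2 * measure M S"
    using measure_notY Tn_pre[OF nY] Tn_pre[OF S(1)] by simp
  finally have "measure M (-C) \<le> 1/2" using S(2) by simp
  moreover have "measure M (-C) = 1 - measure M C"
    using prob_compl[OF Cs] by (simp add: space_M Compl_eq_Diff_UNIV)
  ultimately have mC: "measure M C \<ge> 1/2" by simp
  obtain A0 where A0: "A0 \<in> sets M" "A0 \<subseteq> C" "\<forall>x\<in>A0. (T ^^ n) x \<notin> A0" "measure M C \<le> 3 * measure M A0"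
    using big_disj[OF n Cs CY] by blast
  have "a \<le> measure M A0" using A0(4) mC a by simp
  then obtain A where A: "A \<in> sets M" "A \<subseteq> A0" "measure M A = a"
    using exact_subset[OF A0(1) a(1)] by blast
  have "good n a S A" unfolding good_def
  proof (intro conjI)
    show "A \<in> sets M" "measure M A = a" using A by auto
    show "A \<subseteq> Y" "A \<inter> S = {}" using A(2) A0(2) unfolding C_def R_def by auto
    show "Q n A \<inter> S = {}"
    proof -
      have "x \<notin> S" if "x \<in> Q n A" for x
      proof -
        have x: "x \<in> Y" "(V ^^ n) x \<in> A" using that unfolding Q_def by auto
        then have "(T ^^ n) ((V ^^ n) x) \<in> R" using A(2) A0(2) unfolding C_def by blast
        then show ?thesis using Y_TnVn[OF x(1)] unfolding R_def by simp
      qed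
      then show ?thesis by blast
    qed
    show "A \<inter> Q n A = {}"
    proof -
      have False if "x \<in> A" "x \<in> Q n A" for x
      proof -
        have x: "x \<in> Y" "(V ^^ n) x \<in> A" using that unfolding Q_def by auto
        have "(T ^^ n) ((V ^^ n) x) \<in> A0" using Y_TnVn[OF x(1)] that(1) A(2) by auto
        then show False using A0(3) x(2) A(2) by blast
      qed
      then show ?thesis by blast
    qed
  qed
  then show ?thesis by blast
qed

end



lemma (in setting) UN_sets: "(\<And>k::nat. X k \<in> sets M) \<Longrightarrow> (\<Union>k. X k) \<in> sets M"
  by (rule sets.countable_UN) auto

locale constr = setting +
  fixes n :: "nat \<Rightarrow> nat" and a :: "nat \<Rightarrow> real"
  assumes n_pos: "n k \<ge> 1" and a_nonneg: "0 \<le> a k" and a_le: "a k \<le> 1/16"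
    and a_sum: "(\<Sum>j<k. 2 * a j) \<le> 1/4"
begin

primrec Sacc :: "nat \<Rightarrow> 'a set" where
  "Sacc 0 = {}"
| "Sacc (Suc k) = Sacc k \<union> (SOME A. good (n k) (a k) (Sacc k) A) \<union>
     Q (n k) (SOME A. good (n k) (a k) (Sacc k) A)"

definition Aset where "Aset k = (SOME A. good (n k) (a k) (Sacc k) A)"
definition Qs where "Qs k = Q (n k) (Aset k)"

lemma Sacc_Suc: "Sacc (Suc k) = Sacc k \<union> Aset k \<union> Qs k"
  by (simp add: Aset_def Qs_def)

lemma good_some:
  assumes "S \<in> sets M" "measure M S \<le> 1/4"
  shows "good (n k) (a k) S (SOME A. good (n k) (a k) S A)"
  using step[OF n_pos assms a_nonneg a_le] by (rule someI_ex)

lemma Sacc_props: "Sacc k \<in> sets M \<and> measure M (Sacc k) \<le> (\<Sum>j<k. 2 * a j)"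
proof (induction k)
  case 0 then show ?case by simp
next
  case (Suc k)
  have S: "Sacc k \<in> sets M" "measure M (Sacc k) \<le> 1/4" using Suc a_sum[of k] by auto
  have g: "good (n k) (a k) (Sacc k) (Aset k)" unfolding Aset_def by (rule good_some[OF S])
  then have As: "Aset k \<in> sets M" "measure M (Aset k) = a k" "Qs k \<in> sets M" "measure M (Qs k) = a k"
    unfolding good_def Qs_def using Q_sets Q_measure by auto
  have "measure M (Sacc (Suc k)) \<le> measure M (Sacc k \<union> Aset k) + measure M (Qs k)"
    unfolding Sacc_Suc using S As by (intro measure_Un_le) auto
  also have "\<dots> \<le> measure M (Sacc k) + measure M (Aset k) + measure M (Qs k)"
    using S As measure_Un_le[of "Sacc k" M "Aset k"] by simp
  also have "\<dots> \<le> (\<Sum>j<Suc k. 2 * a j)" using Suc As by simp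
  finally show ?case using S As unfolding Sacc_Suc by auto
qed

lemma Aset_good: "good (n k) (a k) (Sacc k) (Aset k)"
proof -
  have S: "Sacc k \<in> sets M" "measure M (Sacc k) \<le> 1/4" using Sacc_props[of k] a_sum[of k] by auto
  show ?thesis unfolding Aset_def by (rule good_some[OF S])
qed

lemma Aset_sets: "Aset k \<in> sets M" and Aset_Y: "Aset k \<subseteq> Y" and Aset_measure: "measure M (Aset k) = a k"
  and Aset_Sacc: "Aset k \<inter> Sacc k = {}" and Qs_Sacc: "Qs k \<inter> Sacc k = {}"
  and AQ_same: "Aset k \<inter> Qs k = {}"
  using Aset_good[of k] unfolding good_def Qs_def by auto

lemma Qs_sets: "Qs k \<in> sets M" unfolding Qs_def by (rule Q_sets[OF Aset_sets])
lemma Qs_measure: "measure M (Qs k) = a k" unfolding Qs_def using Q_measure[OF Aset_sets] Aset_measure by simp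
lemma Qs_Y: "Qs k \<subseteq> Y" unfolding Qs_def Q_def by blast
lemma Qs_mem: "x \<in> Qs k \<longleftrightarrow> x \<in> Y \<and> (V ^^ n k) x \<in> Aset k" unfolding Qs_def Q_def by blast

lemma sub_Sacc: "j < k \<Longrightarrow> Aset j \<union> Qs j \<subseteq> Sacc k"
proof (induction k)
  case 0 then show ?case by simp
next
  case (Suc k)
  then have "j < k \<or> j = k" by arith
  then show ?case using Suc.IH unfolding Sacc_Suc by blast
qed

lemma AA: assumes "x \<in> Aset j" "x \<in> Aset k" shows "j = k"
proof (rule ccontr)
  assume "j \<noteq> k"
  then have "j < k \<or> k < j" by arith
  then show False using sub_Sacc[of j k] sub_Sacc[of k j] Aset_Sacc[of j] Aset_Sacc[of k] assms by blast
qed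

lemma QQ: assumes "x \<in> Qs j" "x \<in> Qs k" shows "j = k"
proof (rule ccontr)
  assume "j \<noteq> k"
  then have "j < k \<or> k < j" by arith
  then show False using sub_Sacc[of j k] sub_Sacc[of k j] Qs_Sacc[of j] Qs_Sacc[of k] assms by blast
qed

lemma AQ: assumes "x \<in> Aset j" "x \<in> Qs k" shows False
proof -
  consider "j < k" | "k < j" | "j = k" by arith
  then show False
  proof cases
    case 1 then show False using sub_Sacc[of j k] Qs_Sacc[of k] assms by blast
  next
    case 2 then show False using sub_Sacc[of k j] Aset_Sacc[of j] assms by blast
  next
    case 3 then show False using AQ_same[of k] assms by blast
  qed
qed

definition WA where "WA = (\<Union>k. Aset k)"
definition WQ where "WQ = (\<Union>k. Qs k)"
definition kA where "kA x = (SOME k. x \<in> Aset k)"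
definition kQ where "kQ x = (SOME k. x \<in> Qs k)"
definition cc :: "'a \<Rightarrow> int" where
  "cc x = (if x \<in> WA then int (n (kA x)) else if x \<in> WQ then - int (n (kQ x)) else 0)"
definition U where
  "U x = (if x \<in> WA then (T ^^ n (kA x)) x else if x \<in> WQ then (V ^^ n (kQ x)) x else x)"

lemma kA_eq: "x \<in> Aset k \<Longrightarrow> kA x = k"
  unfolding kA_def by (rule some_equality) (auto intro: AA)
lemma kQ_eq: "x \<in> Qs k \<Longrightarrow> kQ x = k"
  unfolding kQ_def by (rule some_equality) (auto intro: QQ)

lemma WA_iff: "x \<in> WA \<longleftrightarrow> (\<exists>k. x \<in> Aset k)" unfolding WA_def by blast
lemma WQ_iff: "x \<in> WQ \<longleftrightarrow> (\<exists>k. x \<in> Qs k)" unfolding WQ_def by blast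

lemma on_A: assumes "x \<in> Aset k" shows "cc x = int (n k)" "U x = (T ^^ n k) x"
  using assms kA_eq[OF assms] WA_iff unfolding cc_def U_def by auto

lemma on_Q: assumes "x \<in> Qs k" shows "cc x = - int (n k)" "U x = (V ^^ n k) x"
proof -
  have "x \<notin> WA" using AQ assms WA_iff by blast
  then show "cc x = - int (n k)" "U x = (V ^^ n k) x"
    using assms kQ_eq[OF assms] WQ_iff unfolding cc_def U_def by auto
qed

lemma on_other: assumes "x \<notin> WA" "x \<notin> WQ" shows "cc x = 0" "U x = x"
  using assms unfolding cc_def U_def by auto

lemma WA_sets: "WA \<in> sets M" unfolding WA_def by (rule UN_sets[OF Aset_sets])
lemma WQ_sets: "WQ \<in> sets M" unfolding WQ_def by (rule UN_sets[OF Qs_sets])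

lemma U_pre: "U -` B = (\<Union>k. Aset k \<inter> (T ^^ n k) -` B) \<union> (\<Union>k. Qs k \<inter> (V ^^ n k) -` B) \<union> (B - WA - WQ)"
proof (intro set_eqI)
  fix x
  show "x \<in> U -` B \<longleftrightarrow> x \<in> (\<Union>k. Aset k \<inter> (T ^^ n k) -` B) \<union> (\<Union>k. Qs k \<inter> (V ^^ n k) -` B) \<union> (B - WA - WQ)"
  proof (cases "x \<in> WA")
    case True
    then obtain k where k: "x \<in> Aset k" using WA_iff by blast
    have a1: "\<And>j. x \<in> Aset j \<longleftrightarrow> j = k" using AA k by blast
    have a2: "\<And>j. x \<notin> Qs j" using AQ k by blast
    show ?thesis using on_A[OF k] a1 a2 True by auto
  next
    case False
    note nA = this
    show ?thesis
    proof (cases "x \<in> WQ")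
      case True
      then obtain k where k: "x \<in> Qs k" using WQ_iff by blast
      have a1: "\<And>j. x \<in> Qs j \<longleftrightarrow> j = k" using QQ k by blast
      have a2: "\<And>j. x \<notin> Aset j" using nA WA_iff by blast
      show ?thesis using on_Q[OF k] a1 a2 True by auto
    next
      case False
      have a1: "\<And>j. x \<notin> Qs j" using False WQ_iff by blast
      have a2: "\<And>j. x \<notin> Aset j" using nA WA_iff by blast
      show ?thesis using on_other[OF nA False] a1 a2 nA False by auto
    qed
  qed
qed

lemma U_pre_sets: "B \<in> sets M \<Longrightarrow> U -` B \<in> sets M"
proof -
  assume B: "B \<in> sets M"
  have "(\<Union>k. Aset k \<inter> (T ^^ n k) -` B) \<in> sets M"
    using Aset_sets pre_sets[OF Tn_meas B] by (intro UN_sets) blast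
  moreover have "(\<Union>k. Qs k \<inter> (V ^^ n k) -` B) \<in> sets M"
    using Qs_sets pre_sets[OF Vn_meas B] by (intro UN_sets) blast
  moreover have "B - WA - WQ \<in> sets M" using B WA_sets WQ_sets by blast
  ultimately show ?thesis unfolding U_pre by blast
qed

lemma U_meas: "U \<in> measurable M M"
  by (rule measurableI) (auto simp: space_M intro: U_pre_sets)

lemma term1: assumes B: "B \<in> sets M"
  shows "measure M (Aset k \<inter> (T ^^ n k) -` B) = measure M (Qs k \<inter> B)"
proof -
  have X: "Qs k \<inter> B \<in> sets M" using Qs_sets B by blast
  have eq: "(T ^^ n k) -` (Qs k \<inter> B) \<inter> Y = Aset k \<inter> (T ^^ n k) -` B"
  proof (intro set_eqI iffI)
    fix x assume "x \<in> (T ^^ n k) -` (Qs k \<inter> B) \<inter> Y"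
    then show "x \<in> Aset k \<inter> (T ^^ n k) -` B" using Y_VnTn[of x "n k"] Qs_mem by auto
  next
    fix x assume x: "x \<in> Aset k \<inter> (T ^^ n k) -` B"
    then have "x \<in> Y" using Aset_Y by blast
    then show "x \<in> (T ^^ n k) -` (Qs k \<inter> B) \<inter> Y" using x Y_VnTn[of x "n k"] Y_Tn[of x "n k"] Qs_mem by auto
  qed
  have "measure M (Aset k \<inter> (T ^^ n k) -` B) = measure M ((T ^^ n k) -` (Qs k \<inter> B))"
    unfolding eq[symmetric] by (rule measure_Y[OF pre_sets[OF Tn_meas X]])
  also have "\<dots> = measure M (Qs k \<inter> B)" by (rule Tn_pre[OF X])
  finally show ?thesis .
qed

lemma term2: assumes B: "B \<in> sets M"
  shows "measure M (Qs k \<inter> (V ^^ n k) -` B) = measure M (Aset k \<inter> B)"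
proof -
  have X: "Aset k \<inter> B \<in> sets M" using Aset_sets B by blast
  have eq: "(V ^^ n k) -` (Aset k \<inter> B) \<inter> Y = Qs k \<inter> (V ^^ n k) -` B"
    using Qs_mem by auto
  have "measure M (Qs k \<inter> (V ^^ n k) -` B) = measure M ((V ^^ n k) -` (Aset k \<inter> B))"
    unfolding eq[symmetric] by (rule measure_Y[OF pre_sets[OF Vn_meas X]])
  also have "\<dots> = measure M (Aset k \<inter> B)" by (rule Vn_pre[OF X])
  finally show ?thesis .
qed

lemma disjA: "disjoint_family (\<lambda>k. Aset k \<inter> X k)"
  unfolding disjoint_family_on_def using AA by blast
lemma disjQ: "disjoint_family (\<lambda>k. Qs k \<inter> X k)"
  unfolding disjoint_family_on_def using QQ by blast

lemma U_measure: assumes B: "B \<in> sets M" shows "measure M (U -` B) = measure M B"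
proof -
  define P1 where "P1 = (\<Union>k. Aset k \<inter> (T ^^ n k) -` B)"
  define P2 where "P2 = (\<Union>k. Qs k \<inter> (V ^^ n k) -` B)"
  define R1 where "R1 = (\<Union>k. Qs k \<inter> B)"
  define R2 where "R2 = (\<Union>k. Aset k \<inter> B)"
  have s1: "\<And>k. Aset k \<inter> (T ^^ n k) -` B \<in> sets M" using Aset_sets pre_sets[OF Tn_meas B] by blast
  have s2: "\<And>k. Qs k \<inter> (V ^^ n k) -` B \<in> sets M" using Qs_sets pre_sets[OF Vn_meas B] by blast
  have s3: "\<And>k. Qs k \<inter> B \<in> sets M" using Qs_sets B by blast
  have s4: "\<And>k. Aset k \<inter> B \<in> sets M" using Aset_sets B by blast
  have P1s: "P1 \<in> sets M" unfolding P1_def by (rule UN_sets[OF s1])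
  have P2s: "P2 \<in> sets M" unfolding P2_def by (rule UN_sets[OF s2])
  have R1s: "R1 \<in> sets M" unfolding R1_def by (rule UN_sets[OF s3])
  have R2s: "R2 \<in> sets M" unfolding R2_def by (rule UN_sets[OF s4])
  have P3s: "B - WA - WQ \<in> sets M" using B WA_sets WQ_sets by blast
  have e1: "measure M P1 = measure M R1"
  proof -
    have "(\<lambda>k. measure M (Aset k \<inter> (T ^^ n k) -` B)) sums measure M P1"
      unfolding P1_def using s1 disjA by (intro finite_measure_UNION) auto
    moreover have "(\<lambda>k. measure M (Qs k \<inter> B)) sums measure M R1"
      unfolding R1_def using s3 disjQ by (intro finite_measure_UNION) auto
    ultimately show ?thesis using term1[OF B] by (simp add: sums_unique2)
  qed
  have e2: "measure M P2 = measure M R2"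
  proof -
    have "(\<lambda>k. measure M (Qs k \<inter> (V ^^ n k) -` B)) sums measure M P2"
      unfolding P2_def using s2 disjQ by (intro finite_measure_UNION) auto
    moreover have "(\<lambda>k. measure M (Aset k \<inter> B)) sums measure M R2"
      unfolding R2_def using s4 disjA by (intro finite_measure_UNION) auto
    ultimately show ?thesis using term2[OF B] by (simp add: sums_unique2)
  qed
  have d12: "P1 \<inter> P2 = {}" unfolding P1_def P2_def using AQ by blast
  have d3: "(P1 \<union> P2) \<inter> (B - WA - WQ) = {}" unfolding P1_def P2_def WA_def WQ_def by blast
  have r12: "R1 \<inter> R2 = {}" unfolding R1_def R2_def using AQ by blast
  have r3: "(R1 \<union> R2) \<inter> (B - WA - WQ) = {}" unfolding R1_def R2_def WA_def WQ_def by blast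
  have Beq: "B = (R1 \<union> R2) \<union> (B - WA - WQ)" unfolding R1_def R2_def WA_def WQ_def by blast
  have "measure M (U -` B) = measure M ((P1 \<union> P2) \<union> (B - WA - WQ))"
    unfolding U_pre P1_def P2_def by simp
  also have "\<dots> = measure M (P1 \<union> P2) + measure M (B - WA - WQ)"
    using P1s P2s P3s d3 by (intro finite_measure_Union) auto
  also have "\<dots> = measure M P1 + measure M P2 + measure M (B - WA - WQ)"
    using finite_measure_Union[OF P1s P2s d12] by simp
  also have "\<dots> = measure M R1 + measure M R2 + measure M (B - WA - WQ)" using e1 e2 by simp
  also have "\<dots> = measure M (R1 \<union> R2) + measure M (B - WA - WQ)"
    using finite_measure_Union[OF R1s R2s r12] by simp
  also have "\<dots> = measure M ((R1 \<union> R2) \<union> (B - WA - WQ))"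
    using R1s R2s P3s r3 by (intro finite_measure_Union[symmetric]) auto
  also have "\<dots> = measure M B" using Beq by simp
  finally show ?thesis .
qed

lemma U_distr: "distr M M U = M"
proof (rule measure_eqI)
  show "sets (distr M M U) = sets M" by simp
  fix B assume "B \<in> sets (distr M M U)"
  then have B: "B \<in> sets M" by simp
  have "emeasure (distr M M U) B = emeasure M (U -` B \<inter> space M)"
    by (rule emeasure_distr[OF U_meas B])
  also have "\<dots> = emeasure M B" using U_measure[OF B] by (simp add: space_M emeasure_eq_measure)
  finally show "emeasure (distr M M U) B = emeasure M B" .
qed

lemma U_facts: assumes x: "x \<in> Y" shows "U x \<in> Y" "U (U x) = x" "int_iter T (cc x) x (U x)"
proof -
  have "U x \<in> Y \<and> U (U x) = x \<and> int_iter T (cc x) x (U x)"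
  proof (cases "x \<in> WA")
    case True
    then obtain k where k: "x \<in> Aset k" using WA_iff by blast
    have "(T ^^ n k) x \<in> Qs k" using Qs_mem Y_Tn[OF x] Y_VnTn[OF x] k by auto
    then have "U ((T ^^ n k) x) = x" using on_Q Y_VnTn[OF x] by simp
    then show ?thesis using on_A[OF k] Y_Tn[OF x] by (simp add: int_iter_def)
  next
    case False
    note nA = this
    show ?thesis
    proof (cases "x \<in> WQ")
      case True
      then obtain k where k: "x \<in> Qs k" using WQ_iff by blast
      have vA: "(V ^^ n k) x \<in> Aset k" using Qs_mem k by blast
      then have "U ((V ^^ n k) x) = x" using on_A Y_TnVn[OF x] by simp
      moreover have "- int (n k) < 0" using n_pos[of k] by simp
      ultimately show ?thesis using on_Q[OF k] Y_Vn[OF x] Y_TnVn[OF x] by (simp add: int_iter_def)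
    next
      case False
      then show ?thesis using on_other[OF nA False] x by (simp add: int_iter_def)
    qed
  qed
  then show "U x \<in> Y" "U (U x) = x" "int_iter T (cc x) x (U x)" by auto
qed

lemma U_aut: "aut M U"
proof -
  have mp: "measure_preserving_map M U" unfolding measure_preserving_map_def using U_meas U_distr by simp
  have "AE x in M. U (U x) = x" using AE_Y by eventually_elim (rule U_facts(2))
  then show ?thesis unfolding aut_def using mp by blast
qed

lemma cc_meas: "cc \<in> measurable M (count_space UNIV)"
proof -
  have "cc -` {m} \<in> sets M" for m
  proof -
    define X1 where "X1 = (\<Union>k. if int (n k) = m then Aset k else {})"
    define X2 where "X2 = (\<Union>k. if - int (n k) = m then Qs k else {})"
    define X3 where "X3 = (if m = 0 then - WA \<inter> - WQ else {})"
    have "cc -` {m} = X1 \<union> X2 \<union> X3"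
    proof (intro set_eqI)
      fix x
      show "x \<in> cc -` {m} \<longleftrightarrow> x \<in> X1 \<union> X2 \<union> X3"
      proof (cases "x \<in> WA")
        case True
        then obtain k where k: "x \<in> Aset k" using WA_iff by blast
        have a1: "\<And>j. x \<in> Aset j \<longleftrightarrow> j = k" using AA k by blast
        have a2: "\<And>j. x \<notin> Qs j" using AQ k by blast
        have "int (n k) \<noteq> 0" using n_pos[of k] by simp
        then show ?thesis using on_A[OF k] a1 a2 True unfolding X1_def X2_def X3_def by auto
      next
        case False
        note nA = this
        show ?thesis
        proof (cases "x \<in> WQ")
          case True
          then obtain k where k: "x \<in> Qs k" using WQ_iff by blast
          have a1: "\<And>j. x \<in> Qs j \<longleftrightarrow> j = k" using QQ k by blast
          have a2: "\<And>j. x \<notin> Aset j" using nA WA_iff by blast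
          have "int (n k) \<noteq> 0" using n_pos[of k] by simp
          then show ?thesis using on_Q[OF k] a1 a2 True unfolding X1_def X2_def X3_def by auto
        next
          case False
          have a1: "\<And>j. x \<notin> Qs j" using False WQ_iff by blast
          have a2: "\<And>j. x \<notin> Aset j" using nA WA_iff by blast
          show ?thesis using on_other[OF nA False] a1 a2 nA False
            unfolding X1_def X2_def X3_def by auto
        qed
      qed
    qed
    moreover have "X1 \<in> sets M" unfolding X1_def using Aset_sets by (intro UN_sets) auto
    moreover have "X2 \<in> sets M" unfolding X2_def using Qs_sets by (intro UN_sets) auto
    moreover have "X3 \<in> sets M" unfolding X3_def using WA_sets WQ_sets compl_sets by auto
    ultimately show ?thesis by simp
  qed
  then show ?thesis by (simp add: measurable_count_space_eq2_countable space_M)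
qed

lemma AQ_measure: "emeasure M (Aset k \<union> Qs k) = ennreal (2 * a k)"
proof -
  have "measure M (Aset k \<union> Qs k) = measure M (Aset k) + measure M (Qs k)"
    using Aset_sets Qs_sets AQ_same by (intro finite_measure_Union) auto
  then show ?thesis using Aset_measure Qs_measure by (simp add: emeasure_eq_measure)
qed

lemma integral_cc:
  fixes f :: "real \<Rightarrow> real"
  assumes f0: "f 0 = 0" and fpos: "\<And>k. 0 \<le> f (real (n k))"
  shows "(\<integral>\<^sup>+ x. ennreal (f (real_of_int \<bar>cc x\<bar>)) \<partial>M) = (\<Sum>k. ennreal (f (real (n k)) * (2 * a k)))"
proof -
  have pw: "ennreal (f (real_of_int \<bar>cc x\<bar>)) = (\<Sum>k. ennreal (f (real (n k))) * indicator (Aset k \<union> Qs k) x)" for x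
  proof (cases "x \<in> WA \<or> x \<in> WQ")
    case True
    then obtain j where j: "x \<in> Aset j \<union> Qs j" using WA_iff WQ_iff by blast
    have others: "x \<notin> Aset k \<union> Qs k" if "k \<noteq> j" for k
      using j that AA QQ AQ by blast
    have cj: "real_of_int \<bar>cc x\<bar> = real (n j)"
      using j on_A on_Q by auto
    have "(\<Sum>k. ennreal (f (real (n k))) * indicator (Aset k \<union> Qs k) x)
          = (\<Sum>k\<in>{j}. ennreal (f (real (n k))) * indicator (Aset k \<union> Qs k) x)"
      by (rule suminf_finite) (use others in auto)
    also have "\<dots> = ennreal (f (real (n j)))" using j by simp
    finally show ?thesis using cj by simp
  next
    case False
    then have "\<And>k. x \<notin> Aset k \<union> Qs k" using WA_iff WQ_iff by blast
    then show ?thesis using on_other False f0 by simp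
  qed
  have ms: "(\<lambda>x. ennreal (f (real (n k))) * indicator (Aset k \<union> Qs k) x) \<in> borel_measurable M" for k
  proof -
    have [measurable]: "Aset k \<union> Qs k \<in> sets M" using Aset_sets Qs_sets by blast
    show ?thesis by measurable
  qed
  have "(\<integral>\<^sup>+ x. ennreal (f (real_of_int \<bar>cc x\<bar>)) \<partial>M)
        = (\<integral>\<^sup>+ x. (\<Sum>k. ennreal (f (real (n k))) * indicator (Aset k \<union> Qs k) x) \<partial>M)"
    using pw by simp
  also have "\<dots> = (\<Sum>k. \<integral>\<^sup>+ x. ennreal (f (real (n k))) * indicator (Aset k \<union> Qs k) x \<partial>M)"
    by (rule nn_integral_suminf[OF ms])
  also have "\<dots> = (\<Sum>k. ennreal (f (real (n k))) * emeasure M (Aset k \<union> Qs k))"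
    using Aset_sets Qs_sets by (subst nn_integral_cmult_indicator) auto
  also have "\<dots> = (\<Sum>k. ennreal (f (real (n k)) * (2 * a k)))"
    using AQ_measure fpos a_nonneg by (simp add: ennreal_mult)
  finally show ?thesis .
qed

lemma cocycle_unique:
  assumes "c \<in> measurable M (count_space UNIV)" "AE x in M. int_iter T (c x) x (U x)"
  shows "(\<integral>\<^sup>+ x. ennreal (f (real_of_int \<bar>c x\<bar>)) \<partial>M) = (\<integral>\<^sup>+ x. ennreal (f (real_of_int \<bar>cc x\<bar>)) \<partial>M)"
proof (rule nn_integral_cong_AE)
  show "AE x in M. ennreal (f (real_of_int \<bar>c x\<bar>)) = ennreal (f (real_of_int \<bar>cc x\<bar>))"
    using assms(2) AE_Y
  proof eventually_elim
    case (elim x)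
    then have "c x = cc x" using int_iter_unique[OF elim(2) U_facts(1)[OF elim(2)] elim(1) U_facts(3)[OF elim(2)]]
      by simp
    then show ?case by simp
  qed
qed

end



lemma mc_mono: assumes "metric_compatible f" "0 \<le> s" "s \<le> t" shows "f s \<le> f t"
proof -
  have "mono_on {0..} f" using assms(1) unfolding metric_compatible_def by blast
  moreover have "s \<in> {0..}" "t \<in> {0..}" using assms(2,3) by auto
  ultimately show ?thesis using assms(3) by (rule mono_onD)
qed

lemma mc_nonneg: assumes "metric_compatible f" "0 \<le> t" shows "0 \<le> f t"
proof -
  have "f 0 \<le> f t" using mc_mono[OF assms(1) order_refl assms(2)] .
  moreover have "f 0 = 0" using assms(1) unfolding metric_compatible_def by blast
  ultimately show ?thesis by simp
qed

lemma mc_pos: "metric_compatible f \<Longrightarrow> 0 < t \<Longrightarrow> 0 < f t"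
  unfolding metric_compatible_def by blast

lemma mc_zero: "metric_compatible f \<Longrightarrow> f 0 = 0"
  unfolding metric_compatible_def by blast

lemma mc_sub: "metric_compatible f \<Longrightarrow> 0 \<le> s \<Longrightarrow> 0 \<le> t \<Longrightarrow> f (s + t) \<le> f s + f t"
  unfolding metric_compatible_def by blast

lemma bigo_nat:
  assumes p: "metric_compatible \<phi>" and q: "metric_compatible \<psi>" and O: "\<phi> \<in> O[at_top](\<psi>)"
  shows "\<exists>K\<ge>0. \<forall>m::nat. \<phi> (real m) \<le> K * \<psi> (real m)"
proof -
  obtain c where c: "c > 0" "eventually (\<lambda>x. norm (\<phi> x) \<le> c * norm (\<psi> x)) at_top"
    using O by (elim landau_o.bigE)
  then obtain N where N: "\<And>x. x \<ge> N \<Longrightarrow> norm (\<phi> x) \<le> c * norm (\<psi> x)"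
    by (auto simp: eventually_at_top_linorder)
  define N0 where "N0 = nat \<lceil>N\<rceil>"
  have N0: "N \<le> real N0" unfolding N0_def by linarith
  have psi1: "\<psi> 1 > 0" using mc_pos[OF q] by simp
  define K where "K = c + \<phi> (real N0) / \<psi> 1"
  have K0: "\<phi> (real N0) / \<psi> 1 \<ge> 0" using mc_nonneg[OF p] psi1 by simp
  have "\<phi> (real m) \<le> K * \<psi> (real m)" for m
  proof -
    have pm: "0 \<le> \<phi> (real m)" "0 \<le> \<psi> (real m)" using mc_nonneg p q by auto
    show ?thesis
    proof (cases "real m \<ge> N")
      case True
      then have "\<phi> (real m) \<le> c * \<psi> (real m)" using N[OF True] pm by simp
      moreover have "0 \<le> \<phi> (real N0) / \<psi> 1 * \<psi> (real m)" by (rule mult_nonneg_nonneg[OF K0 pm(2)])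
      ultimately show ?thesis unfolding K_def by (simp add: algebra_simps)
    next
      case False
      show ?thesis
      proof (cases "m = 0")
        case True then show ?thesis using mc_zero[OF p] mc_zero[OF q] by simp
      next
        case m0: False
        have "\<phi> (real m) \<le> \<phi> (real N0)" using False N0 by (intro mc_mono[OF p]) auto
        also have "\<dots> = \<phi> (real N0) / \<psi> 1 * \<psi> 1" using psi1 by simp
        also have "\<dots> \<le> \<phi> (real N0) / \<psi> 1 * \<psi> (real m)"
          using m0 K0 by (intro mult_left_mono mc_mono[OF q]) auto
        also have "\<dots> \<le> K * \<psi> (real m)" unfolding K_def using c(1) pm by (simp add: algebra_simps)
        finally show ?thesis .
      qed
    qed
  qed
  moreover have "K \<ge> 0" unfolding K_def using c(1) K0 by simp
  ultimately show ?thesis by blast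
qed

lemma notbigo_nat:
  assumes p: "metric_compatible \<phi>" and q: "metric_compatible \<psi>" and O: "\<phi> \<notin> O[at_top](\<psi>)"
  shows "\<exists>m::nat. m \<ge> 1 \<and> C * \<psi> (real m) \<le> \<phi> (real m)"
proof -
  define c where "c = 2 * max C 1"
  have "\<not> eventually (\<lambda>x. norm (\<phi> x) \<le> c * norm (\<psi> x)) at_top"
    using O bigoI by blast
  then obtain x where x: "x \<ge> 1" "\<not> norm (\<phi> x) \<le> c * norm (\<psi> x)"
    by (auto simp: eventually_at_top_linorder)
  have px: "0 \<le> \<phi> x" "0 \<le> \<psi> x" using x(1) mc_nonneg p q by auto
  then have lt: "c * \<psi> x < \<phi> x" using x(2) by simp
  define m where "m = nat \<lceil>x\<rceil>"
  have cx: "\<lceil>x\<rceil> \<ge> 0" using x(1) by simp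
  have rm: "real m = of_int \<lceil>x\<rceil>" unfolding m_def using cx by simp
  have m1: "x \<le> real m" "real m \<le> x + 1"
    unfolding rm using of_int_ceiling_le_add_one[of x] by (simp_all add: le_of_int_ceiling)
  have "m \<ge> 1" using m1 x(1) by linarith
  have "\<psi> (real m) \<le> \<psi> (x + 1)" using m1 x by (intro mc_mono[OF q]) auto
  also have "\<dots> \<le> \<psi> x + \<psi> 1" using x by (intro mc_sub[OF q]) auto
  also have "\<dots> \<le> 2 * \<psi> x" using x mc_mono[OF q, of 1 x] by simp
  finally have pm: "\<psi> (real m) \<le> 2 * \<psi> x" .
  have pm0: "0 \<le> \<psi> (real m)" using mc_nonneg q by simp
  have "C * \<psi> (real m) \<le> max C 1 * \<psi> (real m)" using pm0 by (intro mult_right_mono) auto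
  also have "\<dots> \<le> max C 1 * (2 * \<psi> x)" using pm by (intro mult_left_mono) auto
  also have "\<dots> = c * \<psi> x" unfolding c_def by simp
  also have "\<dots> \<le> \<phi> x" using lt by simp
  also have "\<dots> \<le> \<phi> (real m)" using m1 x by (intro mc_mono[OF p]) auto
  finally show ?thesis using \<open>m \<ge> 1\<close> by blast
qed

lemma easy_dir:
  assumes p: "metric_compatible \<phi>" and q: "metric_compatible \<psi>" and O: "\<phi> \<in> O[at_top](\<psi>)"
  shows "full_group_phi M T \<psi> \<subseteq> full_group_phi M T \<phi>"
proof
  obtain K where K: "K \<ge> 0" "\<And>m::nat. \<phi> (real m) \<le> K * \<psi> (real m)" using bigo_nat[OF p q O] by blast
  fix U assume "U \<in> full_group_phi M T \<psi>"
  then obtain c :: "'a \<Rightarrow> int" where U: "aut M U" "c \<in> measurable M (count_space UNIV)"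
    "AE x in M. int_iter T (c x) x (U x)" "(\<integral>\<^sup>+ x. ennreal (\<psi> (real_of_int \<bar>c x\<bar>)) \<partial>M) < \<infinity>"
    unfolding full_group_phi_def by blast
  have pw: "ennreal (\<phi> (real_of_int \<bar>c x\<bar>)) \<le> ennreal K * ennreal (\<psi> (real_of_int \<bar>c x\<bar>))" for x
  proof -
    have e: "real_of_int \<bar>c x\<bar> = real (nat \<bar>c x\<bar>)" by simp
    have "\<phi> (real_of_int \<bar>c x\<bar>) \<le> K * \<psi> (real_of_int \<bar>c x\<bar>)" unfolding e by (rule K(2))
    then show ?thesis using K(1) mc_nonneg[OF q] by (simp add: ennreal_mult[symmetric] ennreal_leI)
  qed
  have meas: "(\<lambda>x. ennreal (\<psi> (real_of_int \<bar>c x\<bar>))) \<in> borel_measurable M"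
  proof -
    have "(\<lambda>i::int. ennreal (\<psi> (real_of_int \<bar>i\<bar>))) \<in> measurable (count_space UNIV) borel" by simp
    from measurable_compose[OF U(2) this] show ?thesis by (simp add: o_def)
  qed
  have "(\<integral>\<^sup>+ x. ennreal (\<phi> (real_of_int \<bar>c x\<bar>)) \<partial>M) \<le> (\<integral>\<^sup>+ x. ennreal K * ennreal (\<psi> (real_of_int \<bar>c x\<bar>)) \<partial>M)"
    using pw by (intro nn_integral_mono) auto
  also have "\<dots> = ennreal K * (\<integral>\<^sup>+ x. ennreal (\<psi> (real_of_int \<bar>c x\<bar>)) \<partial>M)"
    by (rule nn_integral_cmult[OF meas])
  also have "\<dots> < \<infinity>" using U(4) by (simp add: ennreal_mult_less_top)
  finally show "U \<in> full_group_phi M T \<phi>" unfolding full_group_phi_def using U by blast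
qed

lemma geom_sum: "(\<Sum>j<k. (1/2::real)^j) \<le> 2"
proof (induction k)
  case (Suc k)
  have "(\<Sum>j<k. (1/2::real)^j) = 2 - 2 * (1/2)^k"
    by (induction k) (simp_all add: field_simps)
  then show ?case by simp
qed simp

lemma hard_dir:
  fixes M :: "'a::polish_space measure"
  assumes P: "prob_space M" and S: "sets M = sets borel" and A: "atomless M"
    and aT: "aut M T" and ap: "aperiodic M T"
    and p: "metric_compatible \<phi>" and q: "metric_compatible \<psi>" and O: "\<phi> \<notin> O[at_top](\<psi>)"
  shows "\<not> full_group_phi M T \<psi> \<subseteq> full_group_phi M T \<phi>"
proof -
  obtain V where V: "measure_preserving_map M V" "AE x in M. V (T x) = x" "AE x in M. T (V x) = x"
    using aT unfolding aut_def by blast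
  have Tm: "measure_preserving_map M T" using aT unfolding aut_def by blast
  interpret setting M T V
    using P S A ap V Tm unfolding measure_preserving_map_def
    by (intro setting.intro setting_axioms.intro) auto
  have "\<forall>k. \<exists>m::nat. m \<ge> 1 \<and> 4^k * \<psi> (real m) \<le> \<phi> (real m)"
    using notbigo_nat[OF p q O] by blast
  from choice[OF this] obtain n :: "nat \<Rightarrow> nat"
    where nn: "\<forall>k. n k \<ge> 1 \<and> 4^k * \<psi> (real (n k)) \<le> \<phi> (real (n k))"
    by blast
  have n: "\<And>k. n k \<ge> 1" "\<And>k. 4^k * \<psi> (real (n k)) \<le> \<phi> (real (n k))" using nn by auto
  have psi1: "\<psi> 1 > 0" using mc_pos[OF q] by simp
  have psin: "\<psi> 1 \<le> \<psi> (real (n k))" for k using n(1)[of k] by (intro mc_mono[OF q]) auto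
  have psinpos: "\<psi> (real (n k)) > 0" for k using psin[of k] psi1 by linarith
  define \<beta> where "\<beta> = \<psi> 1 / 16"
  have b0: "\<beta> > 0" unfolding \<beta>_def using psi1 by simp
  define a where "a k = \<beta> / (2^k * \<psi> (real (n k)))" for k
  have a0: "0 \<le> a k" for k unfolding a_def using b0 psinpos[of k] by simp
  have aq: "a k \<le> (1/16) * (1/2)^k" for k
  proof -
    have "a k = (\<psi> 1 / \<psi> (real (n k))) * ((1/16) * (1/2)^k)"
      unfolding a_def \<beta>_def using psinpos[of k] by (simp add: field_simps)
    also have "\<dots> \<le> 1 * ((1/16) * (1/2)^k)"
      using psin[of k] psinpos[of k] by (intro mult_right_mono) auto
    finally show ?thesis by simp
  qed
  have a_le: "a k \<le> 1/16" for k
  proof -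
    have "(1/2::real)^k \<le> 1" by (simp add: power_le_one)
    then show ?thesis using aq[of k] by simp
  qed
  have a_sum: "(\<Sum>j<k. 2 * a j) \<le> 1/4" for k
  proof -
    have "(\<Sum>j<k. 2 * a j) \<le> (\<Sum>j<k. (1/8) * (1/2)^j)"
      using aq by (intro sum_mono) (simp add: field_simps)
    also have "\<dots> = (1/8) * (\<Sum>j<k. (1/2)^j)" by (simp add: sum_distrib_left)
    also have "\<dots> \<le> 1/4" using geom_sum[of k] by simp
    finally show ?thesis .
  qed
  interpret constr M T V n a
    using n(1) a0 a_le a_sum by unfold_locales auto
  have Uin: "U \<in> full_group_phi M T \<psi>"
  proof -
    have AEi: "AE x in M. int_iter T (cc x) x (U x)" using AE_Y by eventually_elim (rule U_facts(3))
    have terms: "\<psi> (real (n k)) * (2 * a k) = 2 * \<beta> * (1/2)^k" for k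
      unfolding a_def using psinpos[of k] by (simp add: field_simps)
    have summ: "summable (\<lambda>k. 2 * \<beta> * (1/2::real)^k)"
      by (intro summable_mult summable_geometric) simp
    have "(\<integral>\<^sup>+ x. ennreal (\<psi> (real_of_int \<bar>cc x\<bar>)) \<partial>M) = (\<Sum>k. ennreal (\<psi> (real (n k)) * (2 * a k)))"
      by (rule integral_cc) (auto intro: mc_zero[OF q] mc_nonneg[OF q])
    also have "\<dots> = (\<Sum>k. ennreal (2 * \<beta> * (1/2)^k))" by (simp only: terms)
    also have "\<dots> \<noteq> \<top>" by (rule ennreal_suminf_neq_top[OF summ]) (use b0 in simp)
    finally have fin: "(\<integral>\<^sup>+ x. ennreal (\<psi> (real_of_int \<bar>cc x\<bar>)) \<partial>M) \<noteq> \<top>" .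
    then have "(\<integral>\<^sup>+ x. ennreal (\<psi> (real_of_int \<bar>cc x\<bar>)) \<partial>M) < \<infinity>" by (simp add: top.not_eq_extremum)
    then show ?thesis unfolding full_group_phi_def using U_aut cc_meas AEi by blast
  qed
  have Unot: "U \<notin> full_group_phi M T \<phi>"
  proof
    assume "U \<in> full_group_phi M T \<phi>"
    then obtain c :: "'a \<Rightarrow> int" where c: "c \<in> measurable M (count_space UNIV)"
      "AE x in M. int_iter T (c x) x (U x)" "(\<integral>\<^sup>+ x. ennreal (\<phi> (real_of_int \<bar>c x\<bar>)) \<partial>M) < \<infinity>"
      unfolding full_group_phi_def by blast
    have big: "2 * \<beta> \<le> \<phi> (real (n k)) * (2 * a k)" for k
    proof -
      have pk: "0 < 2^k * \<psi> (real (n k))" using psinpos[of k] by simp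
      have "(2::real)^k \<le> 4^k" by (intro power_mono) auto
      then have "2^k * \<psi> (real (n k)) \<le> 4^k * \<psi> (real (n k))"
        using psinpos[of k] by (intro mult_right_mono) auto
      then have le: "2^k * \<psi> (real (n k)) \<le> \<phi> (real (n k))" using n(2)[of k] by linarith
      have eq: "\<phi> (real (n k)) * (2 * a k) = (2 * \<beta> * \<phi> (real (n k))) / (2^k * \<psi> (real (n k)))"
        unfolding a_def by simp
      have "2 * \<beta> * (2^k * \<psi> (real (n k))) \<le> 2 * \<beta> * \<phi> (real (n k))"
        using le b0 by (intro mult_left_mono) auto
      then have "2 * \<beta> \<le> (2 * \<beta> * \<phi> (real (n k))) / (2^k * \<psi> (real (n k)))"
        by (subst pos_le_divide_eq[OF pk])
      then show ?thesis using eq by simp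
    qed
    have nn: "0 \<le> \<phi> (real (n k)) * (2 * a k)" for k using big[of k] b0 by linarith
    have ns: "\<not> summable (\<lambda>k. \<phi> (real (n k)) * (2 * a k))"
    proof
      assume "summable (\<lambda>k. \<phi> (real (n k)) * (2 * a k))"
      then have "(\<lambda>k. \<phi> (real (n k)) * (2 * a k)) \<longlonglongrightarrow> 0" by (rule summable_LIMSEQ_zero)
      moreover have "\<exists>N. \<forall>k\<ge>N. 2 * \<beta> \<le> \<phi> (real (n k)) * (2 * a k)" using big by blast
      ultimately have "2 * \<beta> \<le> 0" by (rule LIMSEQ_le_const)
      then show False using b0 by simp
    qed
    have inf: "(\<Sum>k. ennreal (\<phi> (real (n k)) * (2 * a k))) = \<top>"
      by (rule summable_iff_suminf_neq_top[of "\<lambda>k. \<phi> (real (n k)) * (2 * a k)", OF nn ns])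
    have "(\<integral>\<^sup>+ x. ennreal (\<phi> (real_of_int \<bar>c x\<bar>)) \<partial>M) = (\<integral>\<^sup>+ x. ennreal (\<phi> (real_of_int \<bar>cc x\<bar>)) \<partial>M)"
      by (rule cocycle_unique[OF c(1) c(2)])
    also have "\<dots> = (\<Sum>k. ennreal (\<phi> (real (n k)) * (2 * a k)))"
      by (rule integral_cc) (auto intro: mc_zero[OF p] mc_nonneg[OF p])
    also have "\<dots> = \<top>" by (rule inf)
    finally show False using c(3) by simp
  qed
  show ?thesis using Uin Unot by blast
qed

theorem mainTheorem11:
  fixes M :: "'a::polish_space measure"
    and T :: "'a \<Rightarrow> 'a"
    and \<phi> \<psi> :: "real \<Rightarrow> real"
  assumes "standard_atomless_prob M"
    and "metric_compatible \<phi>" and "metric_compatible \<psi>"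
    and "aut M T" and "aperiodic M T"
  shows "(\<phi> \<in> O[at_top](\<psi>) \<longleftrightarrow> full_group_phi M T \<psi> \<subseteq> full_group_phi M T \<phi>) \<and>
         (full_group_phi M T \<phi> = full_group_phi M T \<psi> \<longleftrightarrow>
            \<phi> \<in> O[at_top](\<psi>) \<and> \<psi> \<in> O[at_top](\<phi>))"
proof -
  have sp: "prob_space M" "sets M = sets borel" "atomless M"
    using assms(1) unfolding standard_atomless_prob_def by auto
  have L1: "\<phi> \<in> O[at_top](\<psi>) \<longleftrightarrow> full_group_phi M T \<psi> \<subseteq> full_group_phi M T \<phi>"
    using easy_dir[OF assms(2,3)] hard_dir[OF sp assms(4,5) assms(2,3)] by blast
  have L2: "\<psi> \<in> O[at_top](\<phi>) \<longleftrightarrow> full_group_phi M T \<phi> \<subseteq> full_group_phi M T \<psi>"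
    using easy_dir[OF assms(3,2)] hard_dir[OF sp assms(4,5) assms(3,2)] by blast
  show ?thesis using L1 L2 by blast
qed


end
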